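(* Let $K$ be a compact metrizable space of topological dimension at most $1$, and let $J$ be a compact subset of $K$. Let $B$ be a uniform algebra on $J$ with dense invertibles, and let $A=\{f\in C(K): f|_J\in B\}$. Then $A$ has dense invertibles.
   Context: A uniform algebra on a compact Hausdorff space $J$ is a closed subalgebra of $C(J)$ (supremum norm) containing the constants and separating points. A uniform algebra has dense invertibles if its invertible elements are dense in it. Topological dimension means Lebesgue covering dimension. *)

theory Defs
  imports "HOL-Analysis.Analysis"
begin

text \<open>Functions on a set S are represented by total functions 'a => complex;
  only their values on S matter. An "algebra on S" is a set of such functions
  that is saturated w.r.t. equality on S.\<close>

definition restr_saturated :: "'a set \<Rightarrow> ('a \<Rightarrow> complex) set \<Rightarrow> bool" where
  "restr_saturated S B \<longleftrightarrow> (\<forall>f g. f \<in> B \<and> (\<forall>x\<in>S. f x = g x) \<longrightarrow> g \<in> B)"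

definition uniform_algebra :: "'a::topological_space set \<Rightarrow> ('a \<Rightarrow> complex) set \<Rightarrow> bool" where
  "uniform_algebra J B \<longleftrightarrow>
     restr_saturated J B \<and>
     (\<forall>f\<in>B. continuous_on J f) \<and>
     (\<forall>c. (\<lambda>x. c) \<in> B) \<and>
     (\<forall>f\<in>B. \<forall>g\<in>B. (\<lambda>x. f x + g x) \<in> B \<and> (\<lambda>x. f x * g x) \<in> B) \<and>
     (\<forall>c. \<forall>f\<in>B. (\<lambda>x. c * f x) \<in> B) \<and>
     (\<forall>f. continuous_on J f \<and> (\<forall>e>0. \<exists>g\<in>B. \<forall>x\<in>J. norm (f x - g x) < e) \<longrightarrow> f \<in> B) \<and>
     (\<forall>x\<in>J. \<forall>y\<in>J. x \<noteq> y \<longrightarrow> (\<exists>f\<in>B. f x \<noteq> f y))"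

definition invertible_in :: "'a set \<Rightarrow> ('a \<Rightarrow> complex) set \<Rightarrow> ('a \<Rightarrow> complex) \<Rightarrow> bool" where
  "invertible_in S A g \<longleftrightarrow> g \<in> A \<and> (\<exists>h\<in>A. \<forall>x\<in>S. g x * h x = 1)"

definition dense_invertibles :: "'a set \<Rightarrow> ('a \<Rightarrow> complex) set \<Rightarrow> bool" where
  "dense_invertibles S A \<longleftrightarrow>
     (\<forall>f\<in>A. \<forall>e>0. \<exists>g. invertible_in S A g \<and> (\<forall>x\<in>S. norm (f x - g x) < e))"

text \<open>Lebesgue covering dimension at most n: every finite open cover of K has a
  finite open refinement covering K of order at most n+1.\<close>
definition covering_dim_le :: "'a::topological_space set \<Rightarrow> nat \<Rightarrow> bool" where
  "covering_dim_le K n \<longleftrightarrow>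
     (\<forall>\<U>. finite \<U> \<and> (\<forall>U\<in>\<U>. openin (top_of_set K) U) \<and> \<Union>\<U> = K \<longrightarrow>
        (\<exists>\<V>. finite \<V> \<and> (\<forall>V\<in>\<V>. openin (top_of_set K) V) \<and> \<Union>\<V> = K \<and>
             (\<forall>V\<in>\<V>. \<exists>U\<in>\<U>. V \<subseteq> U) \<and>
             (\<forall>x\<in>K. card {V\<in>\<V>. x \<in> V} \<le> n + 1)))"

end

theory Submission
  imports Defs
begin
lemma ext_complex:
  fixes K J :: "'a::metric_space set" and d :: "'a \<Rightarrow> complex"
  assumes "compact J" "J \<subseteq> K" "continuous_on J d" "r \<ge> 0"
    "\<And>x. x \<in> J \<Longrightarrow> norm (d x) \<le> r"
  obtains D where "continuous_on K D" "\<And>x. x \<in> J \<Longrightarrow> D x = d x"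
     "\<And>x. x \<in> K \<Longrightarrow> norm (D x) \<le> 2 * r"
proof -
  have N: "normal_space (top_of_set K)"
    by (simp add: metrizable_imp_normal_space metrizable_space_euclidean metrizable_space_subtopology)
  have C: "closedin (top_of_set K) J"
    using assms(1,2) by (simp add: closed_subset compact_imp_closed)
  have sub: "subtopology (top_of_set K) J = top_of_set J"
    using assms(2) by (simp add: subtopology_subtopology Int_absorb1 inf.absorb_iff2)
  have cR: "continuous_map (subtopology (top_of_set K) J) euclideanreal (\<lambda>x. Re (d x))"
    unfolding sub using assms(3) by (simp add: continuous_on_Re)
  have cI: "continuous_map (subtopology (top_of_set K) J) euclideanreal (\<lambda>x. Im (d x))"
    unfolding sub using assms(3) by (simp add: continuous_on_Im)
  have bR: "(\<lambda>x. Re (d x)) ` J \<subseteq> {-r..r}"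
  proof (clarsimp)
    fix x assume "x \<in> J"
    then have "\<bar>Re (d x)\<bar> \<le> r" using assms(5) abs_Re_le_cmod order_trans by blast
    then show "- r \<le> Re (d x) \<and> Re (d x) \<le> r" by linarith
  qed
  have bI: "(\<lambda>x. Im (d x)) ` J \<subseteq> {-r..r}"
  proof (clarsimp)
    fix x assume "x \<in> J"
    then have "\<bar>Im (d x)\<bar> \<le> r" using assms(5) abs_Im_le_cmod order_trans by blast
    then show "- r \<le> Im (d x) \<and> Im (d x) \<le> r" by linarith
  qed
  obtain g1 where g1: "continuous_map (top_of_set K) euclideanreal g1"
     "\<And>x. x \<in> J \<Longrightarrow> g1 x = Re (d x)" "g1 ` topspace (top_of_set K) \<subseteq> {-r..r}"
    using Tietze_extension_closed_real_interval[OF N C cR bR] assms(4) by auto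
  obtain g2 where g2: "continuous_map (top_of_set K) euclideanreal g2"
     "\<And>x. x \<in> J \<Longrightarrow> g2 x = Im (d x)" "g2 ` topspace (top_of_set K) \<subseteq> {-r..r}"
    using Tietze_extension_closed_real_interval[OF N C cI bI] assms(4) by auto
  show thesis
  proof
    show "continuous_on K (\<lambda>x. Complex (g1 x) (g2 x))"
      using g1(1) g2(1) by (auto intro!: continuous_intros simp: Complex_eq)
    show "Complex (g1 x) (g2 x) = d x" if "x \<in> J" for x
      using g1(2) g2(2) that by (simp add: complex_eq_iff)
    show "norm (Complex (g1 x) (g2 x)) \<le> 2 * r" if "x \<in> K" for x
    proof -
      have "g1 x \<in> {-r..r}" "g2 x \<in> {-r..r}" using g1(3) g2(3) that by auto
      then have "\<bar>g1 x\<bar> \<le> r" "\<bar>g2 x\<bar> \<le> r" by auto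
      then show ?thesis using cmod_le[of "Complex (g1 x) (g2 x)"] by simp
    qed
  qed
qed
lemma interior_finite_Union_empty:
  fixes F :: "'b::real_normed_vector set set"
  assumes "finite F" "\<And>A. A \<in> F \<Longrightarrow> closed A \<and> interior A = {}"
  shows "interior (\<Union>F) = {}"
  using assms
proof (induction F rule: finite_induct)
  case empty then show ?case by simp
next
  case (insert A F)
  then have "interior (\<Union>F) = {}" "closed A" "interior A = {}" by auto
  then show ?case using interior_closed_Un_empty_interior[of A "\<Union>F"] by simp
qed

lemma pick_generic:
  fixes p :: complex
  assumes "finite F" "r > 0"
  obtains c where "dist c p < r" "c \<noteq> 0" "\<And>a. a \<in> F \<Longrightarrow> c \<notin> span {a}"
proof -
  define G where "G = (\<lambda>a. span {a}) ` insert 0 F"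
  have "interior (\<Union>G) = {}"
  proof (rule interior_finite_Union_empty)
    show "finite G" using assms(1) by (simp add: G_def)
    fix A assume "A \<in> G"
    then obtain a where A: "A = span {a}" unfolding G_def by blast
    have "dim A < DIM(complex)" using A by (simp add: dim_span)
    then have "interior A = {}" by (rule empty_interior_lowdim)
    then show "closed A \<and> interior A = {}" using A by simp
  qed
  have "\<not> ball p r \<subseteq> \<Union>G"
  proof
    assume "ball p r \<subseteq> \<Union>G"
    then have "ball p r \<subseteq> interior (\<Union>G)" using interior_maximal[of "ball p r" "\<Union>G"] by simp
    moreover have "p \<in> ball p r" using assms(2) by simp
    ultimately show False using \<open>interior (\<Union>G) = {}\<close> by blast
  qed
  then obtain c where c: "c \<in> ball p r" "c \<notin> \<Union>G" by blast
  show thesis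
  proof
    show "dist c p < r" using c by (simp add: dist_commute)
    show "c \<noteq> 0" using c(2) by (auto simp: G_def)
    show "c \<notin> span {a}" if "a \<in> F" for a using c(2) that by (auto simp: G_def)
  qed
qed

lemma pick_family:
  fixes p :: "'b \<Rightarrow> complex"
  assumes "finite S" "r > 0"
  shows "\<exists>c. \<forall>V\<in>S. dist (c V) (p V) < r \<and> c V \<noteq> 0 \<and> (\<forall>W\<in>S. W \<noteq> V \<longrightarrow> c V \<notin> span {c W})"
  using assms(1)
proof (induction S rule: finite_induct)
  case empty then show ?case by simp
next
  case (insert V S)
  then obtain c where c: "\<forall>V\<in>S. dist (c V) (p V) < r \<and> c V \<noteq> 0 \<and> (\<forall>W\<in>S. W \<noteq> V \<longrightarrow> c V \<notin> span {c W})"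
    by blast
  obtain z where z: "dist z (p V) < r" "z \<noteq> 0" "\<And>a. a \<in> c ` S \<Longrightarrow> z \<notin> span {a}"
    using pick_generic[of "c ` S" r "p V"] insert(1) assms(2) by auto
  have sym: "y \<notin> span {x}" if "x \<notin> span {y}" "x \<noteq> 0" "y \<noteq> 0" for x y :: complex
  proof
    assume "y \<in> span {x}"
    then obtain t where t: "y = t *\<^sub>R x" by (auto simp: span_singleton)
    then have "t \<noteq> 0" using that(3) by auto
    then have "x = (1/t) *\<^sub>R y" using t by simp
    then show False using that(1) by (metis span_base span_scale singletonI)
  qed
  show ?case
  proof (intro exI[of _ "c(V := z)"] ballI conjI impI)
    fix U assume U: "U \<in> insert V S"
    show "dist ((c(V := z)) U) (p U) < r" using U c z by auto
    show "(c(V := z)) U \<noteq> 0" using U c z by auto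
    fix W assume W: "W \<in> insert V S" "W \<noteq> U"
    show "(c(V := z)) U \<notin> span {(c(V := z)) W}"
    proof (cases "U = V")
      case True then show ?thesis using W z insert(2) by auto
    next
      case False
      show ?thesis
      proof (cases "W = V")
        case True
        then show ?thesis using False U z c sym[of z "c U"] by auto
      next
        case False2: False
        then show ?thesis using False U W c insert(2) by auto
      qed
    qed
  qed
qed
lemma approx_nonzero:
  fixes K :: "'a::metric_space set" and f :: "'a \<Rightarrow> complex"
  assumes K: "compact K" and dimK: "covering_dim_le K 1" and cf: "continuous_on K f" and eta: "\<eta> > 0"
  obtains g where "continuous_on K g" "\<And>x. x\<in>K \<Longrightarrow> g x \<noteq> 0"
     "\<And>x. x\<in>K \<Longrightarrow> norm (f x - g x) < \<eta>"
proof -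
  have "uniformly_continuous_on K f" using K cf compact_uniformly_continuous by blast
  then obtain \<delta> where d: "\<delta> > 0" "\<And>x y. x\<in>K \<Longrightarrow> y\<in>K \<Longrightarrow> dist y x < \<delta> \<Longrightarrow> dist (f y) (f x) < \<eta>/2"
    unfolding uniformly_continuous_on_def using eta by (metis half_gt_zero)
  have "K \<subseteq> (\<Union>x\<in>K. ball x (\<delta>/2))" using d(1) by auto
  then obtain T where T: "T \<subseteq> K" "finite T" "K \<subseteq> (\<Union>x\<in>T. ball x (\<delta>/2))"
    using compactE_image[OF K, of K "\<lambda>x. ball x (\<delta>/2)"] by blast
  define \<U> where "\<U> = (\<lambda>x. K \<inter> ball x (\<delta>/2)) ` T"
  have "finite \<U>" using T by (simp add: \<U>_def)
  moreover have "\<forall>U\<in>\<U>. openin (top_of_set K) U" by (auto simp: \<U>_def openin_open_Int)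
  moreover have "\<Union>\<U> = K" using T by (auto simp: \<U>_def)
  ultimately have pre: "finite \<U> \<and> (\<forall>U\<in>\<U>. openin (top_of_set K) U) \<and> \<Union>\<U> = K" by blast
  have "finite \<U> \<and> (\<forall>U\<in>\<U>. openin (top_of_set K) U) \<and> \<Union>\<U> = K \<longrightarrow> (\<exists>\<V>. finite \<V> \<and> (\<forall>V\<in>\<V>. openin (top_of_set K) V) \<and> \<Union>\<V> = K \<and>
             (\<forall>V\<in>\<V>. \<exists>U\<in>\<U>. V \<subseteq> U) \<and> (\<forall>x\<in>K. card {V\<in>\<V>. x \<in> V} \<le> 1 + 1))"
    using dimK unfolding covering_dim_le_def by (rule spec)
  then have "\<exists>\<V>. finite \<V> \<and> (\<forall>V\<in>\<V>. openin (top_of_set K) V) \<and> \<Union>\<V> = K \<and>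
             (\<forall>V\<in>\<V>. \<exists>U\<in>\<U>. V \<subseteq> U) \<and> (\<forall>x\<in>K. card {V\<in>\<V>. x \<in> V} \<le> 1 + 1)"
    using pre by (rule mp)
  then obtain \<V> where V: "finite \<V>" "\<forall>V\<in>\<V>. openin (top_of_set K) V" "\<Union>\<V> = K"
      "\<forall>V\<in>\<V>. \<exists>U\<in>\<U>. V \<subseteq> U" "\<forall>x\<in>K. card {V\<in>\<V>. x \<in> V} \<le> 1 + 1"
    by blast
  have "\<forall>V\<in>\<V>. \<exists>x. x \<in> T \<and> V \<subseteq> ball x (\<delta>/2)" using V(4) by (auto simp: \<U>_def)
  then obtain ctr where ctr: "\<And>V. V\<in>\<V> \<Longrightarrow> ctr V \<in> T \<and> V \<subseteq> ball (ctr V) (\<delta>/2)" by metis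
  have VK: "V \<subseteq> K" if "V \<in> \<V>" for V using V(2) that openin_subset by fastforce
  have close: "norm (f y - f (ctr V)) < \<eta>/2" if "V \<in> \<V>" "y \<in> V" for V y
  proof -
    have "y \<in> K" "ctr V \<in> K" using VK ctr T(1) that by auto
    moreover have "dist y (ctr V) < \<delta>" using ctr[OF that(1)] that(2) d(1) by (auto simp: dist_commute)
    ultimately show ?thesis using d(2) by (simp add: dist_norm)
  qed
  obtain c where c: "\<forall>V\<in>\<V>. dist (c V) (f (ctr V)) < \<eta>/2 \<and> c V \<noteq> 0 \<and>
       (\<forall>W\<in>\<V>. W \<noteq> V \<longrightarrow> c V \<notin> span {c W})"
    using pick_family[OF V(1), of "\<eta>/2" "\<lambda>V. f (ctr V)"] eta by auto
  have cclose: "norm (f y - c V) < \<eta>" if "V \<in> \<V>" "y \<in> V" for V y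
  proof -
    have "norm (f y - c V) \<le> norm (f y - f (ctr V)) + norm (f (ctr V) - c V)"
      using norm_triangle_ineq[of "f y - f (ctr V)" "f (ctr V) - c V"] by simp
    moreover have "norm (f (ctr V) - c V) < \<eta>/2" using c that(1) by (simp add: dist_norm norm_minus_commute)
    ultimately show ?thesis using close[OF that] by linarith
  qed
  define w where "w = (\<lambda>V y. if K - V = {} then 1 else infdist y (K - V))"
  have wnn: "w V y \<ge> 0" for V y by (simp add: w_def infdist_nonneg)
  have wpos: "w V y > 0 \<longleftrightarrow> y \<in> V" if "V \<in> \<V>" "y \<in> K" for V y
  proof (cases "K - V = {}")
    case True then show ?thesis using that by (auto simp: w_def)
  next
    case False
    have "closedin (top_of_set K) (K - V)" using V(2) that(1) by (simp add: closedin_diff)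
    then have "closed (K - V)" using K compact_imp_closed closedin_closed_trans by blast
    show ?thesis
    proof
      assume "w V y > 0"
      then have "infdist y (K - V) > 0" using False by (simp add: w_def)
      then have "y \<notin> K - V" using infdist_zero[of y "K - V"] by force
      then show "y \<in> V" using that by auto
    next
      assume "y \<in> V"
      then have "y \<notin> K - V" by auto
      then show "w V y > 0" using False \<open>closed (K - V)\<close> infdist_pos_not_in_closed by (auto simp: w_def)
    qed
  qed
  have wzero: "w V y = 0" if "V \<in> \<V>" "y \<in> K" "y \<notin> V" for V y
    using wpos[OF that(1,2)] wnn[of V y] that(3) by linarith
  have wcont: "continuous_on K (w V)" for V
    by (cases "K - V = {}") (auto simp: w_def intro!: continuous_intros)
  define den where "den = (\<lambda>y. \<Sum>V\<in>\<V>. w V y)"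
  define num where "num = (\<lambda>y. \<Sum>V\<in>\<V>. complex_of_real (w V y) * c V)"
  define Sy where "Sy = (\<lambda>y. {V\<in>\<V>. y \<in> V})"
  have Sy_ne: "Sy y \<noteq> {}" if "y \<in> K" for y using V(3) that by (auto simp: Sy_def)
  have Sy_fin: "finite (Sy y)" for y using V(1) by (simp add: Sy_def)
  have den_pos: "den y > 0" if yK: "y \<in> K" for y
  proof -
    obtain V where "V \<in> Sy y" using Sy_ne[OF yK] by blast
    then have "V \<in> \<V>" "w V y > 0" using wpos yK by (auto simp: Sy_def)
    then show ?thesis unfolding den_def using V(1) wnn by (intro sum_pos2) auto
  qed
  have num_Sy: "num y = (\<Sum>V\<in>Sy y. complex_of_real (w V y) * c V)" if yK: "y \<in> K" for y
    unfolding num_def Sy_def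
  proof (rule sum.mono_neutral_right)
    show "finite \<V>" by (rule V(1))
    show "{V \<in> \<V>. y \<in> V} \<subseteq> \<V>" by blast
    show "\<forall>i\<in>\<V> - {V \<in> \<V>. y \<in> V}. complex_of_real (w i y) * c i = 0"
    proof
      fix i assume "i \<in> \<V> - {V \<in> \<V>. y \<in> V}"
      then have "w i y = 0" using wzero[of i y] yK by blast
      then show "complex_of_real (w i y) * c i = 0" by simp
    qed
  qed
  have num_ne: "num y \<noteq> 0" if yK: "y \<in> K" for y
  proof -
    have "card (Sy y) \<ge> 1" using Sy_ne[OF yK] Sy_fin[of y] by (simp add: Suc_le_eq card_gt_0_iff)
    moreover have "card (Sy y) \<le> 2" using V(5) yK unfolding Sy_def by (metis one_add_one)
    ultimately have "card (Sy y) = 1 \<or> card (Sy y) = 2" by linarith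
    then show ?thesis
    proof
      assume "card (Sy y) = 1"
      then obtain V where SV: "Sy y = {V}" by (auto simp: card_1_singleton_iff)
      then have "V \<in> \<V>" "y \<in> V" by (auto simp: Sy_def)
      then have "w V y > 0" "c V \<noteq> 0" using wpos yK c by auto
      then show ?thesis using num_Sy[OF yK] SV by simp
    next
      assume "card (Sy y) = 2"
      then obtain V W where SV: "Sy y = {V, W}" "V \<noteq> W" by (auto simp: card_2_iff)
      then have VW: "V \<in> \<V>" "y \<in> V" "W \<in> \<V>" "y \<in> W" by (auto simp: Sy_def)
      then have a: "w V y > 0" "w W y > 0" using wpos yK by auto
      have nsp: "c V \<notin> span {c W}" using c VW SV(2) by auto
      have "num y = complex_of_real (w V y) * c V + complex_of_real (w W y) * c W"
        using num_Sy[OF yK] SV by simp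
      moreover have "complex_of_real (w V y) * c V + complex_of_real (w W y) * c W \<noteq> 0"
      proof
        assume h: "complex_of_real (w V y) * c V + complex_of_real (w W y) * c W = 0"
        have "c V = (- w W y / w V y) *\<^sub>R c W"
        proof -
          have "complex_of_real (w V y) * c V = - complex_of_real (w W y) * c W" using h
            by (simp add: add_eq_0_iff)
          then show ?thesis using a by (simp add: scaleR_conv_of_real field_simps)
        qed
        then have "c V \<in> span {c W}" by (metis span_base span_scale singletonI)
        then show False using nsp by blast
      qed
      ultimately show ?thesis by simp
    qed
  qed
  define g where "g = (\<lambda>y. num y / complex_of_real (den y))"
  show thesis
  proof
    have cden: "continuous_on K den" unfolding den_def by (intro continuous_on_sum wcont)
    have cnum: "continuous_on K num" unfolding num_def
      by (intro continuous_on_sum continuous_on_mult continuous_on_const continuous_on_of_real wcont)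
    have cden': "continuous_on K (\<lambda>y. complex_of_real (den y))" by (rule continuous_on_of_real[OF cden])
    show "continuous_on K g"
      unfolding g_def by (rule continuous_on_divide[OF cnum cden']) (use den_pos in force)
    show "g x \<noteq> 0" if "x \<in> K" for x using num_ne[OF that] den_pos[OF that] by (simp add: g_def)
    show "norm (f x - g x) < \<eta>" if x: "x \<in> K" for x
    proof -
      have dp: "den x > 0" by (rule den_pos[OF x])
      have e1: "f x * complex_of_real (den x) = (\<Sum>V\<in>\<V>. complex_of_real (w V x) * f x)"
        unfolding den_def of_real_sum sum_distrib_left by (simp add: mult.commute)
      have e2: "(\<Sum>V\<in>\<V>. complex_of_real (w V x) * (f x - c V)) = f x * complex_of_real (den x) - num x"
        unfolding e1 num_def sum_subtractf[symmetric] by (simp add: right_diff_distrib)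
      have dnz: "complex_of_real (den x) \<noteq> 0" using dp by simp
      have "f x - g x = (f x * complex_of_real (den x) - num x) / complex_of_real (den x)"
        using dnz unfolding g_def by (simp add: diff_divide_distrib)
      then have "f x - g x = (\<Sum>V\<in>\<V>. complex_of_real (w V x) * (f x - c V)) / complex_of_real (den x)"
        using e2 by simp
      then have "norm (f x - g x) = norm (\<Sum>V\<in>\<V>. complex_of_real (w V x) * (f x - c V)) / den x"
        using dp by (simp add: norm_divide)
      also have "\<dots> \<le> (\<Sum>V\<in>\<V>. w V x * norm (f x - c V)) / den x"
      proof -
        have "norm (\<Sum>V\<in>\<V>. complex_of_real (w V x) * (f x - c V)) \<le> (\<Sum>V\<in>\<V>. norm (complex_of_real (w V x) * (f x - c V)))"
          by (rule norm_sum)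
        also have "\<dots> = (\<Sum>V\<in>\<V>. w V x * norm (f x - c V))"
          using wnn by (simp add: norm_mult)
        finally show ?thesis using dp by (simp add: divide_right_mono)
      qed
      also have "\<dots> < (\<Sum>V\<in>\<V>. w V x * \<eta>) / den x"
      proof -
        obtain V0 where "V0 \<in> Sy x" using Sy_ne[OF x] by blast
        then have V0: "V0 \<in> \<V>" "x \<in> V0" by (auto simp: Sy_def)
        have "(\<Sum>V\<in>\<V>. w V x * norm (f x - c V)) < (\<Sum>V\<in>\<V>. w V x * \<eta>)"
        proof (rule sum_strict_mono_ex1[OF V(1)])
          show "\<forall>V\<in>\<V>. w V x * norm (f x - c V) \<le> w V x * \<eta>"
          proof
            fix V assume "V \<in> \<V>"
            show "w V x * norm (f x - c V) \<le> w V x * \<eta>"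
            proof (cases "x \<in> V")
              case True then show ?thesis using cclose[OF \<open>V \<in> \<V>\<close> True] wnn[of V x]
                by (simp add: mult_left_mono)
            next
              case False then show ?thesis using wzero[OF \<open>V \<in> \<V>\<close> x] by simp
            qed
          qed
          show "\<exists>V\<in>\<V>. w V x * norm (f x - c V) < w V x * \<eta>"
            using V0 cclose[OF V0] wpos[OF V0(1) x] by (intro bexI[of _ V0]) auto
        qed
        then show ?thesis using dp by (simp add: divide_strict_right_mono)
      qed
      also have "\<dots> = \<eta>" using dp by (simp add: den_def sum_distrib_right[symmetric])
      finally show ?thesis .
    qed
  qed
qed
theorem lemma8p1:
  fixes K J :: "'a::metric_space set" and B :: "('a \<Rightarrow> complex) set"
  assumes "compact K" and "covering_dim_le K 1"
    and "compact J" and "J \<subseteq> K"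
    and "uniform_algebra J B" and "dense_invertibles J B"
  shows "dense_invertibles K {f. continuous_on K f \<and> f \<in> B}"
  unfolding dense_invertibles_def
proof (intro ballI allI impI)
  fix f e assume f: "f \<in> {f. continuous_on K f \<and> f \<in> B}" and e: "(e::real) > 0"
  have sat: "restr_saturated J B" and contB: "\<forall>f\<in>B. continuous_on J f"
    using assms(5) unfolding uniform_algebra_def by auto
  have cfK: "continuous_on K f" and fB: "f \<in> B" using f by auto
  obtain g0 where g0: "invertible_in J B g0" "\<forall>x\<in>J. norm (f x - g0 x) < e/6"
  proof -
    have "e/6 > 0" using e by simp
    then have "\<exists>g. invertible_in J B g \<and> (\<forall>x\<in>J. norm (f x - g x) < e/6)"
      using assms(6) fB unfolding dense_invertibles_def by blast
    then show thesis using that by blast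
  qed
  obtain h0 where h0: "h0 \<in> B" "\<forall>x\<in>J. g0 x * h0 x = 1" and g0B: "g0 \<in> B"
    using g0(1) unfolding invertible_in_def by blast
  have cg0: "continuous_on J g0" using contB g0B by blast
  have cfJ: "continuous_on J f" using cfK assms(4) continuous_on_subset by blast
  obtain D where D: "continuous_on K D" "\<And>x. x \<in> J \<Longrightarrow> D x = f x - g0 x"
     "\<And>x. x \<in> K \<Longrightarrow> norm (D x) \<le> 2 * (e/6)"
    using ext_complex[OF assms(3) assms(4), of "\<lambda>x. f x - g0 x" "e/6"] cfJ cg0 g0(2) e
    by (auto intro!: continuous_intros less_imp_le)
  define f1 where "f1 = (\<lambda>x. f x - D x)"
  have cf1: "continuous_on K f1" unfolding f1_def using cfK D(1) by (intro continuous_intros)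
  have f1J: "f1 x = g0 x" if "x \<in> J" for x using D(2)[OF that] by (simp add: f1_def)
  have ff1: "norm (f x - f1 x) \<le> e/3" if "x \<in> K" for x using D(3)[OF that] by (simp add: f1_def)
  obtain m where m: "m > 0" "\<And>x. x \<in> J \<Longrightarrow> m \<le> norm (g0 x)"
  proof (cases "J = {}")
    case True then show thesis using that[of 1] by auto
  next
    case False
    have "continuous_on J (\<lambda>x. norm (g0 x))" using cg0 by (intro continuous_intros)
    then obtain x0 where x0: "x0 \<in> J" "\<forall>y\<in>J. norm (g0 x0) \<le> norm (g0 y)"
      using continuous_attains_inf[OF assms(3) False] by blast
    have "g0 x0 \<noteq> 0" using h0(2) x0(1) by force
    then show thesis using that[of "norm (g0 x0)"] x0 by auto
  qed
  have "uniformly_continuous_on K f1" using assms(1) cf1 compact_uniformly_continuous by blast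
  then obtain \<rho> where rho: "\<rho> > 0" "\<And>x y. x\<in>K \<Longrightarrow> y\<in>K \<Longrightarrow> dist y x < \<rho> \<Longrightarrow> dist (f1 y) (f1 x) < m/2"
    unfolding uniformly_continuous_on_def using m(1) by (metis half_gt_zero)
  obtain g1 where g1: "continuous_on K g1" "\<And>x. x\<in>K \<Longrightarrow> g1 x \<noteq> 0"
     "\<And>x. x\<in>K \<Longrightarrow> norm (f1 x - g1 x) < min (e/3) (m/2)"
    using approx_nonzero[OF assms(1,2) cf1, of "min (e/3) (m/2)"] e m(1) by auto
  define \<phi> where "\<phi> = (\<lambda>x. if J = {} then 1 else min 1 (infdist x J / \<rho>))"
  have cphi: "continuous_on K \<phi>"
    unfolding \<phi>_def using rho(1) by (cases "J = {}") (auto intro!: continuous_intros)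
  have phi01: "0 \<le> \<phi> x" "\<phi> x \<le> 1" for x
    using rho(1) by (auto simp: \<phi>_def infdist_nonneg)
  have phiJ: "\<phi> x = 0" if "x \<in> J" for x using that by (auto simp: \<phi>_def)
  define g where "g = (\<lambda>x. f1 x + complex_of_real (\<phi> x) * (g1 x - f1 x))"
  have cg: "continuous_on K g" unfolding g_def using cf1 g1(1) cphi
    by (intro continuous_intros) auto
  have gJ: "g x = g0 x" if "x \<in> J" for x using phiJ[OF that] f1J[OF that] by (simp add: g_def)
  have gf1: "norm (g x - f1 x) \<le> norm (f1 x - g1 x)" for x
  proof -
    have "norm (g x - f1 x) = \<phi> x * norm (g1 x - f1 x)"
      using phi01[of x] by (simp add: g_def norm_mult)
    also have "\<dots> \<le> norm (g1 x - f1 x)" using phi01[of x] by (simp add: mult_left_le_one_le)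
    finally show ?thesis by (simp add: norm_minus_commute)
  qed
  have gnz: "g x \<noteq> 0" if xK: "x \<in> K" for x
  proof (cases "\<phi> x = 1")
    case True then show ?thesis using g1(2)[OF xK] by (simp add: g_def)
  next
    case False
    then have Jne: "J \<noteq> {}" by (auto simp: \<phi>_def)
    then have "\<phi> x = min 1 (infdist x J / \<rho>)" by (simp add: \<phi>_def)
    then have "min 1 (infdist x J / \<rho>) \<noteq> 1" using False by metis
    then have lt: "infdist x J / \<rho> < 1" by (metis min_def not_le)
    then have "infdist x J < \<rho>" using rho(1) by (simp add: divide_less_eq)
    then obtain y where y: "y \<in> J" "dist x y < \<rho>"
    proof -
      assume r: "\<And>y. y \<in> J \<Longrightarrow> dist x y < \<rho> \<Longrightarrow> thesis"
      show thesis
      proof (rule ccontr)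
        assume "\<not> thesis"
        then have "\<And>y. y \<in> J \<Longrightarrow> \<rho> \<le> dist x y" using r by force
        then have "\<rho> \<le> infdist x J" unfolding infdist_notempty[OF Jne] using Jne
          by (intro cINF_greatest) auto
        then show False using \<open>infdist x J < \<rho>\<close> by simp
      qed
    qed
    have yK: "y \<in> K" using y(1) assms(4) by blast
    have "dist (f1 x) (f1 y) < m/2" using rho(2)[OF yK xK] y(2) by (simp add: dist_commute)
    moreover have "m \<le> norm (f1 y)" using m(2)[OF y(1)] f1J[OF y(1)] by simp
    ultimately have "norm (f1 x) > m/2"
      using norm_triangle_ineq2[of "f1 y" "f1 x"] by (simp add: dist_norm norm_minus_commute)
    moreover have "norm (g x - f1 x) < m/2" using gf1[of x] g1(3)[OF xK] by simp
    ultimately show ?thesis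
      using norm_triangle_ineq2[of "f1 x" "f1 x - g x"] by (auto simp: norm_minus_commute)
  qed
  define h where "h = (\<lambda>x. 1 / g x)"
  show "\<exists>g. invertible_in K {f. continuous_on K f \<and> f \<in> B} g \<and> (\<forall>x\<in>K. norm (f x - g x) < e)"
  proof (intro exI conjI ballI)
    have gB: "g \<in> B" using sat g0B gJ unfolding restr_saturated_def by metis
    have ch: "continuous_on K h" unfolding h_def using cg gnz by (intro continuous_intros) auto
    have hB: "h \<in> B"
    proof -
      have "\<forall>x\<in>J. h0 x = h x"
      proof
        fix x assume "x \<in> J"
        then show "h0 x = h x" using h0(2) gJ[of x] unfolding h_def
          by (metis mult.commute nonzero_eq_divide_eq mult_zero_right zero_neq_one)
      qed
      then show ?thesis using sat h0(1) unfolding restr_saturated_def by blast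
    qed
    show "invertible_in K {f. continuous_on K f \<and> f \<in> B} g"
      unfolding invertible_in_def
      using cg gB ch hB gnz by (intro conjI bexI[of _ h]) (auto simp: h_def)
    fix x assume xK: "x \<in> K"
    have "norm (f x - g x) \<le> norm (f x - f1 x) + norm (f1 x - g x)"
      using norm_triangle_ineq[of "f x - f1 x" "f1 x - g x"] by simp
    moreover have "norm (f1 x - g x) < e/3"
      using gf1[of x] g1(3)[OF xK] by (simp add: norm_minus_commute)
    ultimately show "norm (f x - g x) < e" using ff1[OF xK] e by linarith
  qed
qed
end
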